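(* Let $\mathcal Q_1,\mathcal Q_2,\dots$ be countably many collections of probability measures on $\{0,1\}^{\mathbb N}$, each of which is UME-learnable. Then $\mathcal Q=\bigcup_{i\in\mathbb N}\mathcal Q_i$ is UME-learnable.
   Context: $\{0,1\}^{\mathbb N}$ carries the product $\sigma$-algebra. For a probability measure $\mu$ on $\{0,1\}^{\mathbb N}$, $\mathrm{Mean}(\mu)\in[0,1]^{\mathbb N}$ is the vector whose $j$-th coordinate is $\mathbb E[X_j]$ for $X\sim\mu$. A collection $\mathcal Q$ of such measures is UME-learnable if there exist (measurable) estimators $\mathcal A_n:(\{0,1\}^{\mathbb N})^n\to[0,1]^{\mathbb N}$, $n\in\mathbb N$, such that for every $\mu\in\mathcal Q$, $\mathbb E_{S\sim\mu^n}\|\mathcal A_n(S)-\mathrm{Mean}(\mu)\|_\infty\to0$ as $n\to\infty$, where $S$ consists of $n$ i.i.d. draws from $\mu$. *)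

theory Defs
  imports "HOL-Probability.Probability"
begin

definition cantor :: "(nat \<Rightarrow> bool) measure" where
  "cantor = (\<Pi>\<^sub>M j\<in>(UNIV::nat set). count_space (UNIV::bool set))"

definition prob_on_cantor :: "(nat \<Rightarrow> bool) measure \<Rightarrow> bool" where
  "prob_on_cantor \<mu> \<longleftrightarrow> prob_space \<mu> \<and> sets \<mu> = sets cantor"

definition Mean :: "(nat \<Rightarrow> bool) measure \<Rightarrow> nat \<Rightarrow> real" where
  "Mean \<mu> j = (\<integral>x. (if x j then 1 else 0) \<partial>\<mu>)"

definition samples :: "nat \<Rightarrow> (nat \<Rightarrow> bool) measure \<Rightarrow> (nat \<Rightarrow> (nat \<Rightarrow> bool)) measure" where
  "samples n \<mu> = (\<Pi>\<^sub>M i\<in>{..<n}. \<mu>)"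

definition sup_err :: "nat \<Rightarrow> ((nat \<Rightarrow> (nat \<Rightarrow> bool)) \<Rightarrow> nat \<Rightarrow> real) \<Rightarrow> (nat \<Rightarrow> bool) measure \<Rightarrow> ennreal" where
  "sup_err n An \<mu> = (\<integral>\<^sup>+ S. (SUP j. ennreal \<bar>An S j - Mean \<mu> j\<bar>) \<partial>(samples n \<mu>))"

definition UME_learnable :: "(nat \<Rightarrow> bool) measure set \<Rightarrow> bool" where
  "UME_learnable Q \<longleftrightarrow>
     (\<exists>A :: nat \<Rightarrow> (nat \<Rightarrow> (nat \<Rightarrow> bool)) \<Rightarrow> nat \<Rightarrow> real.
        (\<forall>n. A n \<in> measurable (\<Pi>\<^sub>M i\<in>{..<n}. cantor) (\<Pi>\<^sub>M j\<in>(UNIV::nat set). (borel :: real measure))) \<and>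
        (\<forall>n S j. A n S j \<in> {0..1}) \<and>
        (\<forall>\<mu>\<in>Q. (\<lambda>n. sup_err n (A n) \<mu>) \<longlonglongrightarrow> 0))"

end

theory Submission
  imports Defs
begin


definition bitv :: "(nat \<Rightarrow> bool) \<Rightarrow> nat \<Rightarrow> real" where
  "bitv x j = (if x j then 1 else 0)"

definition cand :: "(nat \<Rightarrow> nat \<Rightarrow> (nat \<Rightarrow> (nat \<Rightarrow> bool)) \<Rightarrow> nat \<Rightarrow> real) \<Rightarrow> nat \<Rightarrow> nat \<Rightarrow> (nat \<Rightarrow> (nat \<Rightarrow> bool)) \<Rightarrow> nat \<Rightarrow> real" where
  "cand A n a S = A a (n div 2) (restrict S {..<n div 2})"

definition emp :: "nat \<Rightarrow> (nat \<Rightarrow> (nat \<Rightarrow> bool)) \<Rightarrow> nat \<Rightarrow> real" where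
  "emp n S j = (\<Sum>t\<in>{n div 2..<n}. bitv (S t) j) / real (n - n div 2)"

definition dd where
  "dd A n a b S = (SUP j. ennreal \<bar>cand A n a S j - cand A n b S j\<bar>)"

definition jc where
  "jc A n a b S = (LEAST j. dd A n a b S \<le> ennreal \<bar>cand A n a S j - cand A n b S j\<bar> + ennreal (1 / real (Suc n)))"

definition score where
  "score A n K a S = Max ((\<lambda>b. \<bar>cand A n a S (jc A n a b S) - emp n S (jc A n a b S)\<bar>) ` {..<K})"

definition sel where
  "sel A n K S = (LEAST a. a < K \<and> (\<forall>b<K. score A n K a S \<le> score A n K b S))"

definition comb where
  "comb A K n S j = cand A n (sel A n (K n) S) S j"

lemma meas_cand:
  assumes "\<And>a n. A a n \<in> measurable (\<Pi>\<^sub>M i\<in>{..<n}. cantor) (\<Pi>\<^sub>M j\<in>(UNIV::nat set). (borel :: real measure))"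
  shows "(\<lambda>S. cand A n a S j) \<in> borel_measurable (\<Pi>\<^sub>M i\<in>{..<n}. cantor)"
proof -
  have "(\<lambda>S. restrict S {..<n div 2}) \<in> measurable (\<Pi>\<^sub>M i\<in>{..<n}. cantor) (\<Pi>\<^sub>M i\<in>{..<n div 2}. cantor)"
    by (rule measurable_restrict_subset) auto
  then have "(\<lambda>S. A a (n div 2) (restrict S {..<n div 2})) \<in> measurable (\<Pi>\<^sub>M i\<in>{..<n}. cantor) (\<Pi>\<^sub>M j\<in>(UNIV::nat set). (borel :: real measure))"
    using assms by (rule measurable_comp[unfolded comp_def])
  then show ?thesis unfolding cand_def
    by (rule measurable_comp[OF _ measurable_component_singleton, unfolded comp_def]) auto
qed

lemma meas_emp:
  shows "(\<lambda>S. emp n S j) \<in> borel_measurable (\<Pi>\<^sub>M i\<in>{..<n}. cantor)"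
proof -
  have "(\<lambda>S. bitv (S t) j) \<in> borel_measurable (\<Pi>\<^sub>M i\<in>{..<n}. cantor)" if "t < n" for t
  proof -
    have "(\<lambda>S. S t) \<in> measurable (\<Pi>\<^sub>M i\<in>{..<n}. cantor) cantor"
      using that by (intro measurable_component_singleton) auto
    moreover have "(\<lambda>x. x j) \<in> measurable cantor (count_space UNIV)"
      unfolding cantor_def by (rule measurable_component_singleton) auto
    ultimately have "(\<lambda>S. S t j) \<in> measurable (\<Pi>\<^sub>M i\<in>{..<n}. cantor) (count_space UNIV)"
      by (rule measurable_comp[unfolded comp_def])
    moreover have "(\<lambda>b::bool. if b then 1 else (0::real)) \<in> borel_measurable (count_space UNIV)"
      by simp
    ultimately show ?thesis unfolding bitv_def by (rule measurable_comp[unfolded comp_def])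
  qed
  then show ?thesis unfolding emp_def by (intro borel_measurable_divide borel_measurable_sum) auto
qed

context
  fixes A :: "nat \<Rightarrow> nat \<Rightarrow> (nat \<Rightarrow> (nat \<Rightarrow> bool)) \<Rightarrow> nat \<Rightarrow> real"
  assumes Ameas: "\<And>a n. A a n \<in> measurable (\<Pi>\<^sub>M i\<in>{..<n}. cantor) (\<Pi>\<^sub>M j\<in>(UNIV::nat set). (borel :: real measure))"
begin

lemma mc[measurable]: "(\<lambda>S. cand A n a S j) \<in> borel_measurable (\<Pi>\<^sub>M i\<in>{..<n}. cantor)"
  by (rule meas_cand[OF Ameas])

lemma me[measurable]: "(\<lambda>S. emp n S j) \<in> borel_measurable (\<Pi>\<^sub>M i\<in>{..<n}. cantor)"
  by (rule meas_emp)

lemma mdd[measurable]: "dd A n a b \<in> borel_measurable (\<Pi>\<^sub>M i\<in>{..<n}. cantor)"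
  unfolding dd_def by measurable

lemma mjc[measurable]: "jc A n a b \<in> measurable (\<Pi>\<^sub>M i\<in>{..<n}. cantor) (count_space UNIV)"
  unfolding jc_def
proof (rule measurable_Least)
  fix j
  have h: "(\<lambda>S. ennreal \<bar>cand A n a S j - cand A n b S j\<bar> + ennreal (1 / real (Suc n))) \<in> borel_measurable (\<Pi>\<^sub>M i\<in>{..<n}. cantor)"
    by measurable
  show "Measurable.pred (\<Pi>\<^sub>M i\<in>{..<n}. cantor) (\<lambda>S. dd A n a b S \<le> ennreal \<bar>cand A n a S j - cand A n b S j\<bar> + ennreal (1 / real (Suc n)))"
    unfolding pred_def by (rule borel_measurable_le[OF mdd h])
qed

lemma mcj[measurable]: "(\<lambda>S. cand A n a S (jc A n a' b S)) \<in> borel_measurable (\<Pi>\<^sub>M i\<in>{..<n}. cantor)"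
  by (rule measurable_compose_countable[where f="\<lambda>j S. cand A n a S j"]) auto

lemma mej[measurable]: "(\<lambda>S. emp n S (jc A n a' b S)) \<in> borel_measurable (\<Pi>\<^sub>M i\<in>{..<n}. cantor)"
  by (rule measurable_compose_countable[where f="\<lambda>j S. emp n S j"]) auto

lemma msc[measurable]: "score A n K a \<in> borel_measurable (\<Pi>\<^sub>M i\<in>{..<n}. cantor)"
  unfolding score_def by (intro borel_measurable_Max borel_measurable_abs borel_measurable_diff mcj mej) auto

lemma msel[measurable]: "sel A n K \<in> measurable (\<Pi>\<^sub>M i\<in>{..<n}. cantor) (count_space UNIV)"
  unfolding sel_def 
proof (rule measurable_Least)
  fix a
  have h: "Measurable.pred (\<Pi>\<^sub>M i\<in>{..<n}. cantor) (\<lambda>S. score A n K a S \<le> score A n K b S)" for b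
    unfolding pred_def by (rule borel_measurable_le[OF msc msc])
  show "Measurable.pred (\<Pi>\<^sub>M i\<in>{..<n}. cantor) (\<lambda>S. a < K \<and> (\<forall>b<K. score A n K a S \<le> score A n K b S))"
    by (intro pred_intros_logic pred_intros_countable h measurable_const) auto
qed

lemma mcomb: "comb A K n \<in> measurable (\<Pi>\<^sub>M i\<in>{..<n}. cantor) (\<Pi>\<^sub>M j\<in>(UNIV::nat set). (borel :: real measure))"
proof -
  have *: "(\<lambda>S. comb A K n S j) \<in> borel_measurable (\<Pi>\<^sub>M i\<in>{..<n}. cantor)" for j
    unfolding comb_def
    by (rule measurable_compose_countable[where f="\<lambda>a S. cand A n a S j"]) auto
  have "(\<lambda>S j. comb A K n S j) \<in> measurable (\<Pi>\<^sub>M i\<in>{..<n}. cantor) (\<Pi>\<^sub>M j\<in>(UNIV::nat set). (borel :: real measure))"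
    apply (rule measurable_PiM_single')
    using * apply blast
    by simp
  then show ?thesis by simp
qed

end



lemma ennreal_tri: "ennreal \<bar>(x::real) - z\<bar> \<le> ennreal \<bar>x - y\<bar> + ennreal \<bar>y - z\<bar>"
  by (simp add: ennreal_plus[symmetric] del: ennreal_plus)

lemma three_e: "3 * (x::ennreal) = x + x + x"
  by (metis add.commute mult_2 numeral_Bit1 numeral_One distrib_right mult_1 one_add_one)
lemma two_e: "2 * (x::ennreal) = x + x" by (rule mult_2)
lemma sup_near:
  fixes d :: ennreal and x :: "nat \<Rightarrow> ennreal"
  assumes "d = (SUP j. x j)" "d \<le> 1" "\<delta> > 0"
  shows "\<exists>j. d \<le> x j + \<delta>"
    proof (rule ccontr)
      assume "\<not> ?thesis"
      then have lt: "x j + \<delta> \<le> d" for j by (meson linorder_not_le less_imp_le)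
      have "d + \<delta> = (SUP j. x j + \<delta>)"
        unfolding assms(1) by (rule ennreal_SUP_add_left[symmetric]) simp
      also have "\<dots> \<le> d" by (rule SUP_least) (rule lt)
      finally have le: "d + \<delta> \<le> d" .
      have "d < top" using assms(2) ennreal_one_less_top by (rule le_less_trans)
      then have "d \<noteq> top" by simp
      moreover have "d + \<delta> \<le> d + 0" using le by simp
      ultimately have "\<delta> \<le> 0" by (simp add: ennreal_add_left_cancel_le)
      then show False using assms(3) by simp
    qed

lemma pointwise:
  assumes vr: "\<And>a j. cand A n a S j \<in> {0..1}" and iK: "i < K"
  shows "(SUP j. ennreal \<bar>comb A (\<lambda>_. K) n S j - p j\<bar>) \<le>
     3 * (SUP j. ennreal \<bar>cand A n i S j - p j\<bar>)
     + 2 * (\<Sum>a<K. \<Sum>b<K. ennreal \<bar>emp n S (jc A n a b S) - p (jc A n a b S)\<bar>)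
     + ennreal (1 / real (Suc n))"
proof -
  define v where "v a j = cand A n a S j" for a j
  define e where "e j = emp n S j" for j
  define \<delta> where "\<delta> = ennreal (1 / real (Suc n))"
  define J where "J a b = jc A n a b S" for a b
  define sc where "sc a = score A n K a S" for a
  define s where "s = sel A n K S"
  define \<epsilon> where "\<epsilon> = (SUP j. ennreal \<bar>v i j - p j\<bar>)"
  define \<eta> where "\<eta> = (\<Sum>a<K. \<Sum>b<K. ennreal \<bar>e (J a b) - p (J a b)\<bar>)"
  have vb: "\<bar>v a j - v b j\<bar> \<le> 1" for a b j using vr[of a j] vr[of b j] by (auto simp: v_def)
  have Jp: "dd A n a b S \<le> ennreal \<bar>v a (J a b) - v b (J a b)\<bar> + \<delta>" for a b
  proof -
    have ex: "\<exists>j. (SUP j. ennreal \<bar>v a j - v b j\<bar>) \<le> ennreal \<bar>v a j - v b j\<bar> + \<delta>"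
    proof (rule sup_near[OF refl])
      show "(SUP j. ennreal \<bar>v a j - v b j\<bar>) \<le> 1" using vb by (intro SUP_least) (simp add: ennreal_le_1)
      show "\<delta> > 0" unfolding \<delta>_def by (simp add: ennreal_zero_less_divide)
    qed
    show ?thesis unfolding J_def jc_def v_def \<delta>_def dd_def using LeastI_ex[OF ex[unfolded v_def \<delta>_def]] .
  qed
  have scdef: "sc a = Max ((\<lambda>b. \<bar>v a (J a b) - e (J a b)\<bar>) ` {..<K})" for a
    unfolding sc_def score_def v_def e_def J_def ..
  have sc_ge: "\<bar>v a (J a b) - e (J a b)\<bar> \<le> sc a" if "b < K" for a b
    unfolding scdef using that by (intro Max_ge) auto
  have s_prop: "s < K \<and> (\<forall>b<K. sc s \<le> sc b)"
  proof -
    have ne: "sc ` {..<K} \<noteq> {}" using iK by auto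
    obtain a where a: "a \<in> {..<K}" "sc a = Min (sc ` {..<K})"
      using Min_in[OF _ ne] by auto
    have ex: "\<exists>a. a < K \<and> (\<forall>b<K. sc a \<le> sc b)"
      using a by (intro exI[of _ a]) auto
    show ?thesis unfolding s_def sel_def sc_def using LeastI_ex[OF ex[unfolded sc_def]] .
  qed
  have term_le: "ennreal \<bar>e (J a b) - p (J a b)\<bar> \<le> \<eta>" if "a < K" "b < K" for a b
  proof -
    have "ennreal \<bar>e (J a b) - p (J a b)\<bar> \<le> (\<Sum>b'<K. ennreal \<bar>e (J a b') - p (J a b')\<bar>)"
      using that by (intro member_le_sum) auto
    also have "\<dots> \<le> \<eta>" unfolding \<eta>_def
      using that by (intro member_le_sum[where f="\<lambda>a. \<Sum>b'<K. ennreal \<bar>e (J a b') - p (J a b')\<bar>"]) auto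
    finally show ?thesis .
  qed
  have eps_ge: "ennreal \<bar>v i j - p j\<bar> \<le> \<epsilon>" for j
    unfolding \<epsilon>_def by (rule SUP_upper) simp
  have sci: "ennreal (sc i) \<le> \<epsilon> + \<eta>"
  proof -
    have "sc i \<in> (\<lambda>b. \<bar>v i (J i b) - e (J i b)\<bar>) ` {..<K}"
      unfolding scdef using iK by (intro Max_in) auto
    then obtain b where b: "b < K" "sc i = \<bar>v i (J i b) - e (J i b)\<bar>" by auto
    have "ennreal (sc i) \<le> ennreal \<bar>v i (J i b) - p (J i b)\<bar> + ennreal \<bar>p (J i b) - e (J i b)\<bar>"
      unfolding b(2) by (rule ennreal_tri)
    also have "\<dots> \<le> \<epsilon> + \<eta>"
      using eps_ge term_le[OF iK b(1)] by (intro add_mono) (auto simp: abs_minus_commute)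
    finally show ?thesis .
  qed
  have main: "ennreal \<bar>v s j - p j\<bar> \<le> 3 * \<epsilon> + 2 * \<eta> + \<delta>" for j
  proof -
    define js where "js = J s i"
    have "ennreal \<bar>v s j - p j\<bar> \<le> ennreal \<bar>v s j - v i j\<bar> + ennreal \<bar>v i j - p j\<bar>"
      by (rule ennreal_tri)
    also have "ennreal \<bar>v s j - v i j\<bar> \<le> dd A n s i S"
      unfolding dd_def v_def by (rule SUP_upper) simp
    also have "\<dots> \<le> ennreal \<bar>v s js - v i js\<bar> + \<delta>" unfolding js_def by (rule Jp)
    also have "ennreal \<bar>v s js - v i js\<bar> \<le> ennreal \<bar>v s js - e js\<bar> + ennreal \<bar>e js - v i js\<bar>"
      by (rule ennreal_tri)
    also have "ennreal \<bar>e js - v i js\<bar> \<le> ennreal \<bar>e js - p js\<bar> + ennreal \<bar>p js - v i js\<bar>"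
      by (rule ennreal_tri)
    also have "ennreal \<bar>v s js - e js\<bar> \<le> ennreal (sc i)"
    proof -
      have "\<bar>v s js - e js\<bar> \<le> sc s" unfolding js_def by (rule sc_ge[OF iK])
      also have "\<dots> \<le> sc i" using s_prop iK by auto
      finally show ?thesis by (rule ennreal_leI)
    qed
    also have "ennreal \<bar>e js - p js\<bar> \<le> \<eta>" unfolding js_def using s_prop iK by (intro term_le) auto
    also have "ennreal \<bar>p js - v i js\<bar> \<le> \<epsilon>" using eps_ge[of js] by (simp add: abs_minus_commute)
    also have "ennreal \<bar>v i j - p j\<bar> \<le> \<epsilon>" by (rule eps_ge)
    also note sci
    finally have "ennreal \<bar>v s j - p j\<bar> \<le> \<epsilon> + \<eta> + (\<eta> + \<epsilon>) + \<delta> + \<epsilon>"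
      by (simp add: add_mono add.assoc)
    also have "\<dots> = 3 * \<epsilon> + 2 * \<eta> + \<delta>"
      unfolding three_e two_e by (simp add: ac_simps)
    finally show ?thesis .
  qed
  have "comb A (\<lambda>_. K) n S j = v s j" for j unfolding comb_def v_def s_def ..
  then show ?thesis using main unfolding \<epsilon>_def \<eta>_def \<delta>_def e_def J_def v_def
    by (intro SUP_least) simp
qed



lemma psf: "prob_space M \<Longrightarrow> product_sigma_finite (\<lambda>_. M)"
  unfolding product_sigma_finite_def using prob_space_imp_sigma_finite by blast

lemma var_bound:
  fixes g :: "'a \<Rightarrow> real"
  assumes M: "prob_space M" and J: "finite J"
    and gm: "g \<in> borel_measurable M" and gb: "\<And>x. \<bar>g x\<bar> \<le> 1" and g0: "integral\<^sup>L M g = 0"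
  shows "(\<integral>y. (\<Sum>t\<in>J. g (y t))\<^sup>2 \<partial>PiM J (\<lambda>_. M)) \<le> real (card J)"
proof -
  interpret P: product_sigma_finite "\<lambda>_. M" by (rule psf[OF M])
  interpret M: prob_space M by (rule M)
  interpret PS: prob_space "PiM J (\<lambda>_. M)" by (rule prob_space_PiM) (use M in auto)
  have Zm: "(\<lambda>y. g (y t)) \<in> borel_measurable (PiM J (\<lambda>_. M))" if "t \<in> J" for t
    using measurable_comp[OF measurable_component_singleton[OF that] gm] by (simp add: comp_def)
  have Zi: "integrable (PiM J (\<lambda>_. M)) (\<lambda>y. g (y t) * g (y s))" if "t \<in> J" "s \<in> J" for t s
  proof (rule PS.integrable_const_bound[where B=1])
    show "AE y in PiM J (\<lambda>_. M). norm (g (y t) * g (y s)) \<le> 1"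
      using gb by (auto simp: abs_mult intro!: mult_le_one)
  qed (use Zm that in simp)
  have c0: "(\<integral>y. g (y t) * g (y s) \<partial>PiM J (\<lambda>_. M)) = 0" if "t \<in> J" "s \<in> J" "t \<noteq> s" for t s
  proof -
    define f where "f i = (if i = t \<or> i = s then g else (\<lambda>_. 1))" for i
    have "(\<Prod>i\<in>J. f i (y i)) = (\<Prod>i\<in>{t,s}. f i (y i))" for y
      using that J by (intro prod.mono_neutral_right) (auto simp: f_def)
    also have "(\<Prod>i\<in>{t,s}. f i (y i)) = g (y t) * g (y s)" for y
      using that by (simp add: f_def)
    finally have eq: "(\<Prod>i\<in>J. f i (y i)) = g (y t) * g (y s)" for y .
    have "(\<integral>y. (\<Prod>i\<in>J. f i (y i)) \<partial>PiM J (\<lambda>_. M)) = (\<Prod>i\<in>J. integral\<^sup>L M (f i))"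
    proof (rule P.product_integral_prod[OF J])
      fix i assume "i \<in> J"
      show "integrable M (f i)"
        unfolding f_def using gb gm
        by (auto intro!: M.integrable_const_bound[where B=1])
    qed
    also have "\<dots> = 0"
    proof (rule prod_zero)
      show "finite J" by (rule J)
      show "\<exists>i\<in>J. integral\<^sup>L M (f i) = 0" using that g0 by (intro bexI[of _ t]) (simp_all add: f_def)
    qed
    finally show ?thesis unfolding eq .
  qed
  have c1: "(\<integral>y. g (y t) * g (y t) \<partial>PiM J (\<lambda>_. M)) \<le> 1" if "t \<in> J" for t
  proof (rule PS.integral_le_const[OF Zi[OF that that]])
    have "g x * g x \<le> 1" for x
    proof -
      have "\<bar>g x\<bar> * \<bar>g x\<bar> \<le> 1" using gb[of x] by (intro mult_le_one) auto
      then show ?thesis by (simp add: abs_mult_self_eq)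
    qed
    then show "AE y in PiM J (\<lambda>_. M). g (y t) * g (y t) \<le> 1" by simp
  qed
  have "(\<integral>y. (\<Sum>t\<in>J. g (y t))\<^sup>2 \<partial>PiM J (\<lambda>_. M)) = (\<integral>y. (\<Sum>t\<in>J. \<Sum>s\<in>J. g (y t) * g (y s)) \<partial>PiM J (\<lambda>_. M))"
    by (simp add: power2_eq_square sum_product)
  also have "\<dots> = (\<Sum>t\<in>J. \<Sum>s\<in>J. (\<integral>y. g (y t) * g (y s) \<partial>PiM J (\<lambda>_. M)))"
    using Zi by (simp add: Bochner_Integration.integral_sum Bochner_Integration.integrable_sum)
  also have "\<dots> = (\<Sum>t\<in>J. (\<integral>y. g (y t) * g (y t) \<partial>PiM J (\<lambda>_. M)))"
  proof (rule sum.cong[OF refl])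
    fix t assume t: "t \<in> J"
    have "(\<Sum>s\<in>J. (\<integral>y. g (y t) * g (y s) \<partial>PiM J (\<lambda>_. M))) =
          (\<Sum>s\<in>J. if s = t then (\<integral>y. g (y t) * g (y t) \<partial>PiM J (\<lambda>_. M)) else 0)"
      using c0 t by (intro sum.cong) auto
    also have "\<dots> = (\<integral>y. g (y t) * g (y t) \<partial>PiM J (\<lambda>_. M))"
      using t J by simp
    finally show "(\<Sum>s\<in>J. (\<integral>y. g (y t) * g (y s) \<partial>PiM J (\<lambda>_. M))) = (\<integral>y. g (y t) * g (y t) \<partial>PiM J (\<lambda>_. M))" .
  qed
  also have "\<dots> \<le> (\<Sum>t\<in>J. 1)" by (rule sum_mono) (rule c1)
  finally show ?thesis by simp
qed



lemma bitv_meas: "sets \<mu> = sets cantor \<Longrightarrow> (\<lambda>x. bitv x j) \<in> borel_measurable \<mu>"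
proof -
  assume s: "sets \<mu> = sets cantor"
  have "(\<lambda>x. x j) \<in> measurable cantor (count_space UNIV)"
    unfolding cantor_def by (rule measurable_component_singleton) auto
  moreover have "(\<lambda>b::bool. if b then 1 else (0::real)) \<in> borel_measurable (count_space UNIV)"
    by simp
  ultimately have "(\<lambda>x. bitv x j) \<in> borel_measurable cantor"
    unfolding bitv_def by (rule measurable_comp[unfolded comp_def])
  then show ?thesis using measurable_cong_sets[OF s refl] by blast
qed

lemma bitv_range: "bitv x j \<in> {0..1}" by (simp add: bitv_def)

lemma Mean_range:
  assumes "prob_space \<mu>" "sets \<mu> = sets cantor"
  shows "Mean \<mu> j \<in> {0..1}"
proof -
  interpret prob_space \<mu> by fact
  have m: "(\<lambda>x. bitv x j) \<in> borel_measurable \<mu>" by (rule bitv_meas) fact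
  have i: "integrable \<mu> (\<lambda>x. bitv x j)"
    using m by (intro integrable_const_bound[where B=1]) (auto simp: bitv_def)
  have eq: "Mean \<mu> j = (\<integral>x. bitv x j \<partial>\<mu>)" unfolding Mean_def bitv_def ..
  show ?thesis unfolding eq using i
    by (auto intro!: integral_nonneg_AE integral_le_const simp: bitv_def)
qed

lemma amgm: "0 \<le> a \<Longrightarrow> 0 < t \<Longrightarrow> t * a \<le> t\<^sup>2 + (a::real)\<^sup>2"
proof -
  assume a: "0 \<le> a" and t: "0 < t"
  have "0 \<le> (t - a)\<^sup>2" by simp
  then have "2 * t * a \<le> t\<^sup>2 + a\<^sup>2" by (simp add: power2_diff)
  moreover have "0 \<le> t * a" using a t by simp
  ultimately show ?thesis by linarith
qed

lemma inner_bound: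
  assumes P: "prob_space \<mu>" and s: "sets \<mu> = sets cantor" and J: "finite J" "J \<noteq> {}" and tau: "\<tau> > 0"
  shows "(\<integral>\<^sup>+ y. ennreal \<bar>(\<Sum>t\<in>J. bitv (y t) j) / real (card J) - Mean \<mu> j\<bar> \<partial>PiM J (\<lambda>_. \<mu>))
          \<le> ennreal (\<tau> + 1 / (\<tau> * real (card J)))"
proof -
  interpret M: prob_space \<mu> by (rule P)
  interpret PS: prob_space "PiM J (\<lambda>_. \<mu>)" by (rule prob_space_PiM) (use P in auto)
  define p where "p = Mean \<mu> j"
  define N where "N = real (card J)"
  have N: "N > 0" using J by (simp add: N_def card_gt_0_iff)
  define g where "g x = bitv x j - p" for x
  have m: "(\<lambda>x. bitv x j) \<in> borel_measurable \<mu>" by (rule bitv_meas) fact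
  have gm: "g \<in> borel_measurable \<mu>" unfolding g_def using m by simp
  have i: "integrable \<mu> (\<lambda>x. bitv x j)"
    using m by (intro M.integrable_const_bound[where B=1]) (auto simp: bitv_def)
  have p01: "p \<in> {0..1}" unfolding p_def by (rule Mean_range[OF P s])
  have pe: "p = (\<integral>x. bitv x j \<partial>\<mu>)" unfolding p_def Mean_def bitv_def ..
  have g0: "integral\<^sup>L \<mu> g = 0" unfolding g_def using i by (simp add: pe[symmetric] M.prob_space)
  have gb: "\<bar>g x\<bar> \<le> 1" for x using p01 by (auto simp: g_def bitv_def)
  define z where "z y = (\<Sum>t\<in>J. bitv (y t) j) / N - p" for y
  have zeq: "z y = (\<Sum>t\<in>J. g (y t)) / N" for y
    using N by (simp add: z_def g_def sum_subtractf N_def field_simps)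
  have Zm: "(\<lambda>y. g (y t)) \<in> borel_measurable (PiM J (\<lambda>_. \<mu>))" if "t \<in> J" for t
    using measurable_comp[OF measurable_component_singleton[OF that] gm] by (simp add: comp_def)
  have sm: "(\<lambda>y. (\<Sum>t\<in>J. g (y t))) \<in> borel_measurable (PiM J (\<lambda>_. \<mu>))"
    using Zm by (intro borel_measurable_sum) auto
  have sqi: "integrable (PiM J (\<lambda>_. \<mu>)) (\<lambda>y. (\<Sum>t\<in>J. g (y t))\<^sup>2)"
  proof (rule PS.integrable_const_bound[where B="N^2"])
    have "\<bar>\<Sum>t\<in>J. g (y t)\<bar> \<le> N" for y
    proof -
      have "\<bar>\<Sum>t\<in>J. g (y t)\<bar> \<le> (\<Sum>t\<in>J. \<bar>g (y t)\<bar>)" by (rule sum_abs)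
      also have "\<dots> \<le> (\<Sum>t\<in>J. 1)" using gb by (intro sum_mono) auto
      finally show ?thesis by (simp add: N_def)
    qed
    then have "\<bar>\<Sum>t\<in>J. g (y t)\<bar>\<^sup>2 \<le> N\<^sup>2" for y
      by (intro power_mono) auto
    then have "(\<Sum>t\<in>J. g (y t))\<^sup>2 \<le> N\<^sup>2" for y
      by (simp only: power2_abs)
    then show "AE y in PiM J (\<lambda>_. \<mu>). norm ((\<Sum>t\<in>J. g (y t))\<^sup>2) \<le> N\<^sup>2" by simp
  qed (use sm in simp)
  have vb: "(\<integral>y. (\<Sum>t\<in>J. g (y t))\<^sup>2 \<partial>PiM J (\<lambda>_. \<mu>)) \<le> N"
    unfolding N_def by (rule var_bound[OF P J(1) gm gb g0])
  have pw: "ennreal \<bar>z y\<bar> \<le> ennreal (\<tau> + (\<Sum>t\<in>J. g (y t))\<^sup>2 / (\<tau> * N\<^sup>2))" for y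
  proof (rule ennreal_leI)
    have "\<tau> * \<bar>z y\<bar> \<le> \<tau>\<^sup>2 + (z y)\<^sup>2"
      using amgm[OF abs_ge_zero tau, of "z y"] by (simp only: power2_abs)
    then have "\<bar>z y\<bar> \<le> \<tau> + (z y)\<^sup>2 / \<tau>" using tau by (simp add: field_simps power2_eq_square)
    also have "(z y)\<^sup>2 / \<tau> = (\<Sum>t\<in>J. g (y t))\<^sup>2 / (\<tau> * N\<^sup>2)"
      unfolding zeq using N tau by (simp add: power_divide field_simps)
    finally show "\<bar>z y\<bar> \<le> \<tau> + (\<Sum>t\<in>J. g (y t))\<^sup>2 / (\<tau> * N\<^sup>2)" .
  qed
  have "(\<integral>\<^sup>+ y. ennreal \<bar>z y\<bar> \<partial>PiM J (\<lambda>_. \<mu>)) \<le> (\<integral>\<^sup>+ y. ennreal (\<tau> + (\<Sum>t\<in>J. g (y t))\<^sup>2 / (\<tau> * N\<^sup>2)) \<partial>PiM J (\<lambda>_. \<mu>))"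
    by (rule nn_integral_mono) (rule pw)
  also have "\<dots> = ennreal (\<integral>y. \<tau> + (\<Sum>t\<in>J. g (y t))\<^sup>2 / (\<tau> * N\<^sup>2) \<partial>PiM J (\<lambda>_. \<mu>))"
    using sqi tau by (intro nn_integral_eq_integral) auto
  also have "(\<integral>y. \<tau> + (\<Sum>t\<in>J. g (y t))\<^sup>2 / (\<tau> * N\<^sup>2) \<partial>PiM J (\<lambda>_. \<mu>)) = \<tau> + (\<integral>y. (\<Sum>t\<in>J. g (y t))\<^sup>2 \<partial>PiM J (\<lambda>_. \<mu>)) / (\<tau> * N\<^sup>2)"
    using sqi by (simp add: PS.prob_space)
  also have "\<dots> \<le> \<tau> + N / (\<tau> * N\<^sup>2)"
    using vb tau N by (intro add_left_mono divide_right_mono) auto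
  also have "N / (\<tau> * N\<^sup>2) = 1 / (\<tau> * N)" using N by (simp add: power2_eq_square)
  finally show ?thesis unfolding z_def p_def N_def by (simp add: ennreal_leI)
qed



lemma meas_tr:
  assumes "f \<in> measurable (PiM I (\<lambda>_. cantor)) N" "sets \<mu> = sets cantor"
  shows "f \<in> measurable (PiM I (\<lambda>_. \<mu>)) N"
proof -
  have "sets (PiM I (\<lambda>_. \<mu>)) = sets (PiM I (\<lambda>_. cantor))"
    using assms(2) by (intro sets_PiM_cong) auto
  then show ?thesis using assms(1) measurable_cong_sets[OF _ refl] by blast
qed

lemma marg:
  assumes P: "prob_space \<mu>" and IJ: "I \<inter> J = {}" "finite I" "finite J"
    and F: "F \<in> borel_measurable (PiM I (\<lambda>_. \<mu>))"
  shows "(\<integral>\<^sup>+ S. F (restrict S I) \<partial>PiM (I \<union> J) (\<lambda>_. \<mu>)) = integral\<^sup>N (PiM I (\<lambda>_. \<mu>)) F"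
proof -
  interpret P: product_sigma_finite "\<lambda>_. \<mu>" by (rule psf[OF P])
  interpret PJ: prob_space "PiM J (\<lambda>_. \<mu>)" by (rule prob_space_PiM) (use P in auto)
  have Fm: "(\<lambda>S. F (restrict S I)) \<in> borel_measurable (PiM (I \<union> J) (\<lambda>_. \<mu>))"
    using measurable_comp[OF measurable_restrict_subset F] by (simp add: comp_def)
  have "(\<integral>\<^sup>+ S. F (restrict S I) \<partial>PiM (I \<union> J) (\<lambda>_. \<mu>))
      = (\<integral>\<^sup>+ x. (\<integral>\<^sup>+ y. F (restrict (merge I J (x, y)) I) \<partial>PiM J (\<lambda>_. \<mu>)) \<partial>PiM I (\<lambda>_. \<mu>))"
    by (rule P.product_nn_integral_fold[OF IJ Fm])
  also have "\<dots> = (\<integral>\<^sup>+ x. F x \<partial>PiM I (\<lambda>_. \<mu>))"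
  proof (rule nn_integral_cong)
    fix x assume x: "x \<in> space (PiM I (\<lambda>_. \<mu>))"
    then have "restrict x I = x" by (auto simp: space_PiM PiE_def extensional_restrict)
    then show "(\<integral>\<^sup>+ y. F (restrict (merge I J (x, y)) I) \<partial>PiM J (\<lambda>_. \<mu>)) = F x"
      using IJ(1) by (simp add: PJ.emeasure_space_1)
  qed
  finally show ?thesis .
qed

lemma cand_merge:
  assumes "{..<n div 2} \<inter> J = {}"
  shows "cand A n a (merge {..<n div 2} J (x, y)) = cand A n a x"
  unfolding cand_def using assms by simp

lemma jc_merge:
  assumes "{..<n div 2} \<inter> J = {}"
  shows "jc A n a b (merge {..<n div 2} J (x, y)) = jc A n a b x"
  unfolding jc_def dd_def cand_merge[OF assms] ..

lemma emp_merge: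
  shows "emp n (merge {..<n div 2} {n div 2..<n} (x, y)) j = (\<Sum>t\<in>{n div 2..<n}. bitv (y t) j) / real (card {n div 2..<n})"
  unfolding emp_def by (intro arg_cong2[where f="(/)"] sum.cong) (auto simp: merge_def)



lemma final_bound:
  assumes Am: "\<And>a n. A a n \<in> measurable (\<Pi>\<^sub>M i\<in>{..<n}. cantor) (\<Pi>\<^sub>M j\<in>(UNIV::nat set). (borel :: real measure))"
    and Ar: "\<And>a n S j. A a n S j \<in> {0..1}"
    and P: "prob_space \<mu>" and s: "sets \<mu> = sets cantor" and iK: "i < K" and n: "1 \<le> n" and tau: "\<tau> > 0"
  shows "sup_err n (comb A (\<lambda>_. K) n) \<mu> \<le> 3 * sup_err (n div 2) (A i (n div 2)) \<mu>
     + 2 * (of_nat K * of_nat K * ennreal (\<tau> + 1 / (\<tau> * real (n - n div 2)))) + ennreal (1 / real (Suc n))"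
proof -
  define I where "I = {..<n div 2}"
  define J where "J = {n div 2..<n}"
  have IJ: "I \<inter> J = {}" "finite I" "finite J" "I \<union> J = {..<n}" by (auto simp: I_def J_def)
  have Jne: "J \<noteq> {}" using n by (auto simp: J_def)
  have cardJ: "card J = n - n div 2" by (simp add: J_def)
  define M where "M = PiM {..<n} (\<lambda>_. \<mu>)"
  interpret P: product_sigma_finite "\<lambda>_. \<mu>" by (rule psf[OF P])
  interpret PS: prob_space M unfolding M_def by (rule prob_space_PiM) (use P in auto)
  define p where "p = Mean \<mu>"
  define \<epsilon> where "\<epsilon> S = (SUP j. ennreal \<bar>cand A n i S j - p j\<bar>)" for S
  define T where "T a b S = ennreal \<bar>emp n S (jc A n a b S) - p (jc A n a b S)\<bar>" for a b S
  define \<eta> where "\<eta> S = (\<Sum>a<K. \<Sum>b<K. T a b S)" for S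
  define \<delta> where "\<delta> = ennreal (1 / real (Suc n))"
  define B where "B = ennreal (\<tau> + 1 / (\<tau> * real (n - n div 2)))"
  have mc': "(\<lambda>S. cand A n a S j) \<in> borel_measurable M" for a j
    unfolding M_def by (rule meas_tr[OF mc[OF Am] s])
  have em: "\<epsilon> \<in> borel_measurable M" unfolding \<epsilon>_def using mc' by measurable
  have Tm: "T a b \<in> borel_measurable M" for a b
  proof -
    have "(\<lambda>S. ennreal \<bar>emp n S j - p j\<bar>) \<in> borel_measurable M" for j
      using meas_tr[OF meas_emp[of n j] s] unfolding M_def by measurable
    moreover have "jc A n a b \<in> measurable M (count_space UNIV)"
      unfolding M_def by (rule meas_tr[OF mjc[OF Am] s])
    ultimately show ?thesis unfolding T_def
      by (rule measurable_compose_countable[where f="\<lambda>j S. ennreal \<bar>emp n S j - p j\<bar>"])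
  qed
  have etam: "\<eta> \<in> borel_measurable M" unfolding \<eta>_def using Tm by (intro borel_measurable_sum) auto
  have cr: "cand A n a S j \<in> {0..1}" for a S j unfolding cand_def by (rule Ar)
  have "sup_err n (comb A (\<lambda>_. K) n) \<mu> = (\<integral>\<^sup>+ S. (SUP j. ennreal \<bar>comb A (\<lambda>_. K) n S j - p j\<bar>) \<partial>M)"
    unfolding sup_err_def samples_def M_def p_def ..
  also have "\<dots> \<le> (\<integral>\<^sup>+ S. (3 * \<epsilon> S + 2 * \<eta> S) + \<delta> \<partial>M)"
    unfolding \<epsilon>_def \<eta>_def T_def \<delta>_def
    by (intro nn_integral_mono pointwise[OF cr iK])
  also have "\<dots> = (\<integral>\<^sup>+ S. 3 * \<epsilon> S + 2 * \<eta> S \<partial>M) + \<delta>"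
    using em etam by (subst nn_integral_add) (auto simp: PS.emeasure_space_1)
  also have "(\<integral>\<^sup>+ S. 3 * \<epsilon> S + 2 * \<eta> S \<partial>M) = 3 * (\<integral>\<^sup>+ S. \<epsilon> S \<partial>M) + 2 * (\<integral>\<^sup>+ S. \<eta> S \<partial>M)"
    using em etam by (simp add: nn_integral_add nn_integral_cmult)
  also have "(\<integral>\<^sup>+ S. \<epsilon> S \<partial>M) = sup_err (n div 2) (A i (n div 2)) \<mu>"
  proof -
    define F where "F x = (SUP j. ennreal \<bar>A i (n div 2) x j - p j\<bar>)" for x
    have Fm: "F \<in> borel_measurable (PiM I (\<lambda>_. \<mu>))"
    proof -
      have "A i (n div 2) \<in> measurable (PiM I (\<lambda>_. \<mu>)) (\<Pi>\<^sub>M j\<in>(UNIV::nat set). (borel :: real measure))"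
        unfolding I_def by (rule meas_tr[OF Am s])
      then have "(\<lambda>x. A i (n div 2) x j) \<in> borel_measurable (PiM I (\<lambda>_. \<mu>))" for j
        by (rule measurable_comp[OF _ measurable_component_singleton, unfolded comp_def]) auto
      then show ?thesis unfolding F_def by measurable
    qed
    have "\<epsilon> S = F (restrict S I)" for S unfolding \<epsilon>_def F_def cand_def I_def ..
    then have "(\<integral>\<^sup>+ S. \<epsilon> S \<partial>M) = (\<integral>\<^sup>+ S. F (restrict S I) \<partial>PiM (I \<union> J) (\<lambda>_. \<mu>))"
      unfolding M_def IJ(4) by simp
    also have "\<dots> = integral\<^sup>N (PiM I (\<lambda>_. \<mu>)) F" by (rule marg[OF P IJ(1-3) Fm])
    also have "\<dots> = sup_err (n div 2) (A i (n div 2)) \<mu>"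
      unfolding sup_err_def samples_def F_def p_def I_def ..
    finally show ?thesis .
  qed
  also have "(\<integral>\<^sup>+ S. \<eta> S \<partial>M) \<le> of_nat K * of_nat K * B"
  proof -
    have Tb: "(\<integral>\<^sup>+ S. T a b S \<partial>M) \<le> B" for a b
    proof -
      have Tm': "T a b \<in> borel_measurable (PiM (I \<union> J) (\<lambda>_. \<mu>))" using Tm unfolding M_def IJ(4) .
      have "(\<integral>\<^sup>+ S. T a b S \<partial>M) = (\<integral>\<^sup>+ x. (\<integral>\<^sup>+ y. T a b (merge I J (x, y)) \<partial>PiM J (\<lambda>_. \<mu>)) \<partial>PiM I (\<lambda>_. \<mu>))"
        unfolding M_def IJ(4)[symmetric] by (rule P.product_nn_integral_fold[OF IJ(1-3) Tm'])
      also have "\<dots> \<le> (\<integral>\<^sup>+ x. B \<partial>PiM I (\<lambda>_. \<mu>))"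
      proof (rule nn_integral_mono)
        fix x
        define j0 where "j0 = jc A n a b x"
        have "T a b (merge I J (x, y)) = ennreal \<bar>(\<Sum>t\<in>J. bitv (y t) j0) / real (card J) - Mean \<mu> j0\<bar>" for y
          unfolding T_def j0_def p_def I_def J_def emp_merge using IJ(1) unfolding I_def J_def by (simp add: jc_merge)
        then have "(\<integral>\<^sup>+ y. T a b (merge I J (x, y)) \<partial>PiM J (\<lambda>_. \<mu>)) = (\<integral>\<^sup>+ y. ennreal \<bar>(\<Sum>t\<in>J. bitv (y t) j0) / real (card J) - Mean \<mu> j0\<bar> \<partial>PiM J (\<lambda>_. \<mu>))"
          by simp
        also have "\<dots> \<le> ennreal (\<tau> + 1 / (\<tau> * real (card J)))"
          by (rule inner_bound[OF P s IJ(3) Jne tau])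
        finally show "(\<integral>\<^sup>+ y. T a b (merge I J (x, y)) \<partial>PiM J (\<lambda>_. \<mu>)) \<le> B"
          unfolding B_def cardJ .
      qed
      also have "\<dots> = B"
      proof -
        interpret PI: prob_space "PiM I (\<lambda>_. \<mu>)" by (rule prob_space_PiM) (use P in auto)
        show ?thesis by (simp add: PI.emeasure_space_1)
      qed
      finally show ?thesis .
    qed
    have "(\<integral>\<^sup>+ S. \<eta> S \<partial>M) = (\<Sum>a<K. \<Sum>b<K. (\<integral>\<^sup>+ S. T a b S \<partial>M))"
      unfolding \<eta>_def using Tm by (simp add: nn_integral_sum borel_measurable_sum)
    also have "\<dots> \<le> (\<Sum>a<K. \<Sum>b<K. B)" using Tb by (intro sum_mono) auto
    also have "\<dots> = of_nat K * of_nat K * B" by (simp add: mult.assoc)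
    finally show ?thesis .
  qed
  finally show ?thesis unfolding B_def \<delta>_def by (simp add: mult_left_mono add_mono)
qed



definition Kf :: "nat \<Rightarrow> nat" where "Kf n = Suc (nat \<lfloor>real n powr (1/8)\<rfloor>)"

lemma asym: "(\<lambda>n::nat. 2 * real n powr (-(1/8)) + 128 * real n powr (-(3/8)) + 1/(real n + 1)) \<longlonglongrightarrow> 0"
proof -
  have a: "(\<lambda>n::nat. real n powr (-(1/8))) \<longlonglongrightarrow> 0"
    by (rule tendsto_neg_powr) (auto simp: filterlim_real_sequentially)
  have b: "(\<lambda>n::nat. real n powr (-(3/8))) \<longlonglongrightarrow> 0"
    by (rule tendsto_neg_powr) (auto simp: filterlim_real_sequentially)
  have c: "(\<lambda>n::nat. 1/(real n + 1)) \<longlonglongrightarrow> 0"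
    using LIMSEQ_inverse_real_of_nat by (simp add: inverse_eq_divide add.commute)
  have "(\<lambda>n::nat. 2 * real n powr (-(1/8)) + 128 * real n powr (-(3/8)) + 1/(real n + 1)) \<longlonglongrightarrow> 2 * 0 + 128 * 0 + 0"
    by (intro tendsto_intros a b c)
  then show ?thesis by simp
qed

lemma Kf_bounds: "real n powr (1/8) < real (Kf n)" "real (Kf n) \<le> real n powr (1/8) + 1"
proof -
  have "0 \<le> real n powr (1/8)" by simp
  then have "real (nat \<lfloor>real n powr (1/8)\<rfloor>) = real_of_int \<lfloor>real n powr (1/8)\<rfloor>" by simp
  then show "real n powr (1/8) < real (Kf n)" "real (Kf n) \<le> real n powr (1/8) + 1"
    unfolding Kf_def by (simp_all, linarith+)
qed

definition rr :: "nat \<Rightarrow> real" where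
  "rr n = 2 * (real (Kf n) * real (Kf n) * (1 / real (Kf n) ^ 3 + 1 / (1 / real (Kf n) ^ 3 * real (n - n div 2)))) + 1 / real (Suc n)"

lemma rr_lim: "rr \<longlonglongrightarrow> 0"
proof (rule tendsto_sandwich[OF _ _ tendsto_const asym])
  show "\<forall>\<^sub>F n in sequentially. 0 \<le> rr n" by (auto simp: rr_def)
  show "\<forall>\<^sub>F n in sequentially. rr n \<le> 2 * real n powr (-(1/8)) + 128 * real n powr (-(3/8)) + 1/(real n + 1)"
  proof (rule eventually_sequentiallyI[of 1])
    fix n :: nat assume n: "1 \<le> n"
    define K where "K = real (Kf n)"
    define x where "x = real n powr (1/8)"
    define N where "N = real (n - n div 2)"
    have x1: "x \<ge> 1" using n unfolding x_def by (intro ge_one_powr_ge_zero) auto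
    have x: "x > 0" using x1 by simp
    have K: "x < K" "K \<le> x + 1" using Kf_bounds[of n] by (simp_all add: K_def x_def)
    have N: "N \<ge> real n / 2" unfolding N_def by linarith
    have Np: "N > 0" using n unfolding N_def by simp
    have np: "real n > 0" using n by simp
    have x5: "x^5 = real n powr (5/8)" unfolding x_def using np by (simp add: powr_realpow[symmetric] powr_powr)
    have Kp: "K > 0" using K x by simp
    have e1: "K * K * (1 / K^3) = 1 / K" using Kp by (simp add: power3_eq_cube)
    have e2: "K * K * (1 / (1 / K^3 * N)) = K^5 / N" using Kp Np by (simp add: field_simps power_numeral_reduce)
    have "rr n = 2 * (K * K * (1 / K^3) + K * K * (1 / (1 / K^3 * N))) + 1 / (real n + 1)"
      unfolding rr_def K_def[symmetric] N_def[symmetric] by (simp add: distrib_left add.commute)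
    also have "\<dots> = 2 / K + 2 * K^5 / N + 1 / (real n + 1)" unfolding e1 e2 by simp
    also have "\<dots> \<le> 2 / x + 128 * x^5 / real n + 1 / (real n + 1)"
    proof (intro add_mono order.refl)
      show "2 / K \<le> 2 / x" using K x by (intro divide_left_mono) auto
      have "K^5 \<le> (2*x)^5" using K x x1 by (intro power_mono) auto
      then have "K^5 \<le> 32 * x^5" by (simp add: power_mult_distrib)
      then have "2 * K^5 / N \<le> 64 * x^5 / N" using Np by (intro divide_right_mono) auto
      also have "64 * x^5 / N \<le> 64 * x^5 / (real n / 2)"
        using N np x by (intro divide_left_mono) auto
      also have "\<dots> = 128 * x^5 / real n" by simp
      finally show "2 * K^5 / N \<le> 128 * x^5 / real n" .
    qed
    also have "2 / x = 2 * real n powr (-(1/8))" unfolding x_def powr_minus_divide by simp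
    also have "128 * x^5 / real n = 128 * real n powr (-(3/8))"
    proof -
      have "x^5 / real n = real n powr (5/8) / real n powr 1" unfolding x5 using np by simp
      also have "\<dots> = real n powr (5/8 - 1)" by (rule powr_diff[symmetric])
      also have "(5/8 - 1 :: real) = -(3/8)" by simp
      finally show ?thesis by simp
    qed
    finally show "rr n \<le> 2 * real n powr (-(1/8)) + 128 * real n powr (-(3/8)) + 1/(real n + 1)" .
  qed
qed



lemma Kf_ev: "\<forall>\<^sub>F n in sequentially. i < Kf n"
proof (rule eventually_sequentiallyI[of "i^8"])
  fix n assume n: "i^8 \<le> n"
  show "i < Kf n"
  proof (cases "i = 0")
    case True then show ?thesis by (simp add: Kf_def)
  next
    case False
    then have ip: "real i > 0" by simp
    have e: "real i ^ 8 = real i powr (real 8)" by (rule powr_realpow[OF ip, symmetric])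
    have "(real i powr (real 8)) powr (1/8) = real i powr (real 8 * (1/8))" by (rule powr_powr)
    also have "\<dots> = real i" using ip by simp
    finally have "real i = (real i ^ 8) powr (1/8)" unfolding e by simp
    also have "\<dots> \<le> real n powr (1/8)"
      using n by (intro powr_mono2) (auto simp flip: of_nat_power)
    also have "\<dots> < real (Kf n)" by (rule Kf_bounds(1))
    finally show ?thesis by simp
  qed
qed

theorem theorem3:
  fixes Q :: "nat \<Rightarrow> (nat \<Rightarrow> bool) measure set"
  assumes "\<And>i. \<forall>\<mu>\<in>Q i. prob_on_cantor \<mu>"
    and "\<And>i. UME_learnable (Q i)"
  shows "UME_learnable (\<Union>i. Q i)"
proof -
  have "\<forall>i. \<exists>A :: nat \<Rightarrow> (nat \<Rightarrow> (nat \<Rightarrow> bool)) \<Rightarrow> nat \<Rightarrow> real.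
        (\<forall>n. A n \<in> measurable (\<Pi>\<^sub>M i\<in>{..<n}. cantor) (\<Pi>\<^sub>M j\<in>(UNIV::nat set). (borel :: real measure))) \<and>
        (\<forall>n S j. A n S j \<in> {0..1}) \<and>
        (\<forall>\<mu>\<in>Q i. (\<lambda>n. sup_err n (A n) \<mu>) \<longlonglongrightarrow> 0)"
    using assms(2)[unfolded UME_learnable_def] by (intro allI) assumption
  then have "\<exists>AA. \<forall>i. (\<forall>n. AA i n \<in> measurable (\<Pi>\<^sub>M i\<in>{..<n}. cantor) (\<Pi>\<^sub>M j\<in>(UNIV::nat set). (borel :: real measure))) \<and>
        (\<forall>n S j. AA i n S j \<in> {0..1}) \<and>
        (\<forall>\<mu>\<in>Q i. (\<lambda>n. sup_err n (AA i n) \<mu>) \<longlonglongrightarrow> 0)"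
    by (rule choice)
  then obtain AA where AA: "\<forall>i. (\<forall>n. AA i n \<in> measurable (\<Pi>\<^sub>M i\<in>{..<n}. cantor) (\<Pi>\<^sub>M j\<in>(UNIV::nat set). (borel :: real measure))) \<and>
        (\<forall>n S j. AA i n S j \<in> {0..1}) \<and>
        (\<forall>\<mu>\<in>Q i. (\<lambda>n. sup_err n (AA i n) \<mu>) \<longlonglongrightarrow> 0)"
    by (elim exE)
  have Am: "\<And>a n. AA a n \<in> measurable (\<Pi>\<^sub>M i\<in>{..<n}. cantor) (\<Pi>\<^sub>M j\<in>(UNIV::nat set). (borel :: real measure))"
    using AA[rule_format, THEN conjunct1] by blast
  have Ar: "\<And>a n S j. AA a n S j \<in> {0..1}" using AA[rule_format, THEN conjunct2, THEN conjunct1] by blast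
  have Ac: "\<And>i \<mu>. \<mu> \<in> Q i \<Longrightarrow> (\<lambda>n. sup_err n (AA i n) \<mu>) \<longlonglongrightarrow> 0"
    using AA[rule_format, THEN conjunct2, THEN conjunct2] by blast
  show ?thesis unfolding UME_learnable_def
  proof (intro exI[of _ "comb AA Kf"] conjI allI ballI)
    fix n show "comb AA Kf n \<in> measurable (\<Pi>\<^sub>M i\<in>{..<n}. cantor) (\<Pi>\<^sub>M j\<in>(UNIV::nat set). (borel :: real measure))"
      by (rule mcomb[OF Am])
  next
    fix n S j show "comb AA Kf n S j \<in> {0..1}" unfolding comb_def cand_def by (rule Ar)
  next
    fix \<mu> assume "\<mu> \<in> (\<Union>i. Q i)"
    then obtain i where i: "\<mu> \<in> Q i" by auto
    have P: "prob_space \<mu>" and s: "sets \<mu> = sets cantor"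
      using assms(1)[of i] i unfolding prob_on_cantor_def by auto
    define f where "f m = sup_err m (AA i m) \<mu>" for m
    have f0: "f \<longlonglongrightarrow> 0" unfolding f_def by (rule Ac[OF i])
    have bound: "\<forall>\<^sub>F n in sequentially. sup_err n (comb AA Kf n) \<mu> \<le> 3 * f (n div 2) + ennreal (rr n)"
      using Kf_ev[of i] eventually_ge_at_top[of 1]
    proof eventually_elim
      case (elim n)
      define K where "K = Kf n"
      define \<tau> where "\<tau> = 1 / real K ^ 3"
      have Kp: "K > 0" by (simp add: K_def Kf_def)
      have tau: "\<tau> > 0" using Kp by (simp add: \<tau>_def)
      have ce: "comb AA Kf n = comb AA (\<lambda>_. K) n" unfolding comb_def K_def by (intro ext) simp
      have "sup_err n (comb AA Kf n) \<mu> \<le> 3 * sup_err (n div 2) (AA i (n div 2)) \<mu>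
         + 2 * (of_nat K * of_nat K * ennreal (\<tau> + 1 / (\<tau> * real (n - n div 2)))) + ennreal (1 / real (Suc n))"
        unfolding ce using elim by (intro final_bound[OF Am Ar P s]) (auto simp: K_def tau)
      moreover have eqB: "2 * (of_nat K * of_nat K * ennreal (\<tau> + 1 / (\<tau> * real (n - n div 2)))) + ennreal (1 / real (Suc n)) = ennreal (rr n)"
      proof -
        have nn: "0 \<le> \<tau> + 1 / (\<tau> * real (n - n div 2))" using tau by simp
        have "2 * (of_nat K * of_nat K * ennreal (\<tau> + 1 / (\<tau> * real (n - n div 2)))) = ennreal (2 * (real K * real K * (\<tau> + 1 / (\<tau> * real (n - n div 2)))))"
          using nn by (simp add: ennreal_mult' ennreal_of_nat_eq_real_of_nat)
        then show ?thesis unfolding rr_def K_def[symmetric] \<tau>_def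
          using nn by (simp add: ennreal_plus[symmetric] \<tau>_def del: ennreal_plus)
      qed
      ultimately show ?case unfolding f_def by (simp add: add.assoc)
    qed
    have up: "(\<lambda>n. 3 * f (n div 2) + ennreal (rr n)) \<longlonglongrightarrow> 3 * 0 + ennreal 0"
    proof (intro tendsto_add ennreal_tendsto_cmult tendsto_ennrealI rr_lim)
      show "(3::ennreal) < top" by simp
      show "(\<lambda>n. f (n div 2)) \<longlonglongrightarrow> 0"
        by (rule filterlim_compose[OF f0 filterlim_at_top_div_const_nat]) simp
    qed
    show "(\<lambda>n. sup_err n (comb AA Kf n) \<mu>) \<longlonglongrightarrow> 0"
      by (rule tendsto_sandwich[OF _ bound tendsto_const]) (use up in auto)
  qed
qed


end
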